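(* Let $\mathcal H_\mathrm{S},\mathcal H_\mathrm{M},\mathcal H_\mathrm{R}$ be finite-dimensional Hilbert spaces, $\mathcal H_\mathrm{R}=\sum_r E_r|r\rangle\langle r|$ a reservoir Hamiltonian with orthonormal eigenbasis $\{|r\rangle\}$, $\beta>0$, $P_r=e^{-\beta E_r}/\sum_s e^{-\beta E_s}$, $\rho^\mathrm{i}_\mathrm{R}=\sum_rP_r|r\rangle\langle r|$. Let $\rho^\mathrm{i}_\mathrm{SM}$ be a density operator on $\mathcal H_\mathrm{S}\otimes\mathcal H_\mathrm{M}$, $U_\mathrm{SR}$ a unitary on $\mathcal H_\mathrm{S}\otimes\mathcal H_\mathrm{R}$, $U=U_\mathrm{SR}\otimes 1_\mathrm{M}$, $\rho^\mathrm{f}_\mathrm{SM}=\mathrm{Tr}_\mathrm{R}[U(\rho^\mathrm{i}_\mathrm{SM}\otimes\rho^\mathrm{i}_\mathrm{R})U^\dagger]$. Let $\{|a\rangle\}$ be an orthonormal eigenbasis of $\rho^\mathrm{i}_\mathrm{S}=\mathrm{Tr}_\mathrm{M}\rho^\mathrm{i}_\mathrm{SM}$, $\rho^\mathrm{f}_\mathrm{S}=\mathrm{Tr}_\mathrm{M}\rho^\mathrm{f}_\mathrm{SM}=\sum_{a'}\tilde P_{a'}|a'\rangle\langle a'|$ a spectral decomposition, and $\{|b\rangle\}$ an orthonormal eigenbasis of $\rho^\mathrm{i}_\mathrm{M}$. Set $P_{ab}=\langle a,b|\rho^\mathrm{i}_\mathrm{SM}|a,b\rangle$, $P_a=\sum_bP_{ab}$,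 $P_b=\sum_aP_{ab}$, $\tilde P_{a'b}=\langle a',b|\rho^\mathrm{f}_\mathrm{SM}|a',b\rangle$, and assume $P_{ab}>0$ for all $a,b$. For $\gamma=(a,b,r,a',r')$ and $\gamma_\mathrm{SR}=(a,r,a',r')$ let $P_\mathrm{F}[\gamma]=|\langle a',r'|U_\mathrm{SR}|a,r\rangle|^2P_{ab}P_r$ and $P_\mathrm{F}[\gamma_\mathrm{SR}]=\sum_bP_\mathrm{F}[\gamma]=|\langle a',r'|U_\mathrm{SR}|a,r\rangle|^2P_aP_r$. Define $\tilde\sigma_\mathrm{S|M}(\gamma)=-\ln(\tilde P_{a'b}/P_b)+\ln(P_{ab}/P_b)+\beta(E_{r'}-E_r)$, $\sigma_\mathrm{S}(\gamma_\mathrm{SR})=-\ln\tilde P_{a'}+\ln P_a+\beta(E_{r'}-E_r)$, and the stochastic dissipative information $\tilde\sigma_\mathrm{I}=\tilde\sigma_\mathrm{S|M}-\sigma_\mathrm{S}$. Then for every $\gamma_\mathrm{SR}$ with $P_\mathrm{F}[\gamma_\mathrm{SR}]>0$, $$\sum_b\frac{P_\mathrm{F}[\gamma]}{P_\mathrm{F}[\gamma_\mathrm{SR}]}\,e^{-\tilde\sigma_\mathrm{I}(\gamma)}=1,\qquad\text{and}\qquad\sum_{\gamma:\,P_\mathrm{F}[\gamma]>0}P_\mathrm{F}[\gamma]\,e^{-\tilde\sigma_\mathrm{I}(\gamma)}=1.$$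
   Context: The trajectories correspond to two-point projective measurements in local eigenbases of system and memory and the energy eigenbasis of the reservoir; the memory does not evolve. The first sum is the average conditioned on the system–reservoir trajectory $\gamma_\mathrm{SR}$, the second is the unconditional average. *)

theory Defs
  imports Complex_Main "HOL-Library.Extended_Real"
begin

text \<open>Finite-dimensional Hilbert spaces are modelled as functions from a finite
  index type (a fixed computational basis) to the complex numbers; operators as
  complex-valued kernels on that index type.\<close>

type_synonym 'a cvec = "'a \<Rightarrow> complex"
type_synonym 'a cop = "'a \<Rightarrow> 'a \<Rightarrow> complex"

definition cinner :: "('a::finite) cvec \<Rightarrow> 'a cvec \<Rightarrow> complex" where
  "cinner u v = (\<Sum>x\<in>UNIV. cnj (u x) * v x)"

definition apply_op :: "('a::finite) cop \<Rightarrow> 'a cvec \<Rightarrow> 'a cvec" where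
  "apply_op A v = (\<lambda>x. \<Sum>y\<in>UNIV. A x y * v y)"

definition op_mult :: "('a::finite) cop \<Rightarrow> 'a cop \<Rightarrow> 'a cop" where
  "op_mult A B = (\<lambda>x z. \<Sum>y\<in>UNIV. A x y * B y z)"

definition adj :: "'a cop \<Rightarrow> 'a cop" where
  "adj A = (\<lambda>x y. cnj (A y x))"

definition id_op :: "'a cop" where
  "id_op = (\<lambda>x y. if x = y then 1 else 0)"

definition ctrace :: "('a::finite) cop \<Rightarrow> complex" where
  "ctrace A = (\<Sum>x\<in>UNIV. A x x)"

definition ketbra :: "'a cvec \<Rightarrow> 'a cvec \<Rightarrow> 'a cop" where
  "ketbra u v = (\<lambda>x y. u x * cnj (v y))"

definition tensor_vec :: "'a cvec \<Rightarrow> 'b cvec \<Rightarrow> ('a \<times> 'b) cvec" where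
  "tensor_vec u v = (\<lambda>(x, y). u x * v y)"

definition tensor_op :: "'a cop \<Rightarrow> 'b cop \<Rightarrow> ('a \<times> 'b) cop" where
  "tensor_op A B = (\<lambda>(x, y) (x', y'). A x x' * B y y')"

definition ptrace2 :: "('a \<times> 'b::finite) cop \<Rightarrow> 'a cop" where
  "ptrace2 A = (\<lambda>x x'. \<Sum>y\<in>UNIV. A (x, y) (x', y))"

definition ptrace1 :: "('a::finite \<times> 'b) cop \<Rightarrow> 'b cop" where
  "ptrace1 A = (\<lambda>y y'. \<Sum>x\<in>UNIV. A (x, y) (x, y'))"

text \<open>An orthonormal basis of the space indexed by the finite type 'a is an
  orthonormal family of CARD('a) vectors, indexed by 'a itself.\<close>
definition orthonormal_basis :: "('a::finite \<Rightarrow> 'a cvec) \<Rightarrow> bool" where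
  "orthonormal_basis e \<longleftrightarrow> (\<forall>i j. cinner (e i) (e j) = (if i = j then 1 else 0))"

definition is_eigvec :: "('a::finite) cop \<Rightarrow> 'a cvec \<Rightarrow> bool" where
  "is_eigvec A v \<longleftrightarrow> (\<exists>c. apply_op A v = (\<lambda>x. c * v x))"

definition eigenbasis :: "('a::finite) cop \<Rightarrow> ('a \<Rightarrow> 'a cvec) \<Rightarrow> bool" where
  "eigenbasis A e \<longleftrightarrow> orthonormal_basis e \<and> (\<forall>i. is_eigvec A (e i))"

definition density_op :: "('a::finite) cop \<Rightarrow> bool" where
  "density_op \<rho> \<longleftrightarrow>
     (\<forall>v. Im (cinner v (apply_op \<rho> v)) = 0 \<and> 0 \<le> Re (cinner v (apply_op \<rho> v)))
     \<and> ctrace \<rho> = 1"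

definition unitary_op :: "('a::finite) cop \<Rightarrow> bool" where
  "unitary_op U \<longleftrightarrow> op_mult (adj U) U = id_op \<and> op_mult U (adj U) = id_op"

text \<open>Logarithm and exponential with the conventions ln 0 = -\<infinity>, exp(-\<infinity>) = 0,
  needed for stochastic entropies of trajectories with vanishing final probability.
  (The value at +\<infinity> is irrelevant for the theorem and set to 0.)\<close>
definition eln :: "real \<Rightarrow> ereal" where
  "eln x = (if 0 < x then ereal (ln x) else -\<infinity>)"

definition eexp :: "ereal \<Rightarrow> real" where
  "eexp t = (case t of ereal x \<Rightarrow> exp x | _ \<Rightarrow> 0)"

end

theory Submission
  imports Defs "HOL-Analysis.Analysis"
begin


lemma onb_complete:
  fixes e :: "'a::finite \<Rightarrow> 'a cvec"
  assumes "orthonormal_basis e"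
  shows "(\<Sum>i\<in>UNIV. e i x * cnj (e i y)) = (if x = y then 1 else 0)"
proof -
  define A :: "complex^'a^'a" where "A = (\<chi> i j. cnj (e i j))"
  define B :: "complex^'a^'a" where "B = (\<chi> j i. e i j)"
  have "A ** B = mat 1"
    using assms unfolding A_def B_def orthonormal_basis_def cinner_def
    by (simp add: matrix_matrix_mult_def mat_def vec_eq_iff)
  hence "B ** A = mat 1" using matrix_left_right_inverse by blast
  hence "(B ** A) $ x $ y = mat 1 $ x $ y" by simp
  thus ?thesis unfolding A_def B_def by (simp add: matrix_matrix_mult_def mat_def)
qed


lemma parseval:
  fixes e :: "'a::finite \<Rightarrow> 'a cvec"
  assumes "orthonormal_basis e"
  shows "(\<Sum>i\<in>UNIV. cnj (cinner (e i) v) * cinner (e i) w) = cinner v w"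
proof -
  have "(\<Sum>i\<in>UNIV. cnj (cinner (e i) v) * cinner (e i) w)
      = (\<Sum>i\<in>UNIV. \<Sum>x\<in>UNIV. \<Sum>y\<in>UNIV. cnj (v x) * w y * (e i x * cnj (e i y)))"
    unfolding cinner_def by (simp add: sum_distrib_left sum_distrib_right mult_ac)
  also have "\<dots> = (\<Sum>x\<in>UNIV. \<Sum>y\<in>UNIV. cnj (v x) * w y * (\<Sum>i\<in>UNIV. e i x * cnj (e i y)))"
    by (rule trans[OF sum.swap], rule sum.cong[OF refl], subst sum_distrib_left, rule sum.swap)
  also have "\<dots> = cinner v w"
    unfolding onb_complete[OF assms] cinner_def by (simp add: if_distrib cong: if_cong)
  finally show ?thesis .
qed

lemma trace_onb:
  fixes f :: "'a::finite \<Rightarrow> 'a cvec"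
  assumes "orthonormal_basis f"
  shows "(\<Sum>i\<in>UNIV. cinner (f i) (apply_op A (f i))) = ctrace A"
proof -
  have "(\<Sum>i\<in>UNIV. cinner (f i) (apply_op A (f i)))
      = (\<Sum>i\<in>UNIV. \<Sum>x\<in>UNIV. \<Sum>y\<in>UNIV. A x y * (f i y * cnj (f i x)))"
    unfolding cinner_def apply_op_def by (simp add: sum_distrib_left mult_ac)
  also have "\<dots> = (\<Sum>x\<in>UNIV. \<Sum>y\<in>UNIV. A x y * (\<Sum>i\<in>UNIV. f i y * cnj (f i x)))"
    by (rule trans[OF sum.swap], rule sum.cong[OF refl], subst sum_distrib_left, rule sum.swap)
  also have "\<dots> = ctrace A"
    unfolding onb_complete[OF assms] ctrace_def by (simp add: if_distrib cong: if_cong)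
  finally show ?thesis .
qed

lemma cinner_tensor:
  "cinner (tensor_vec u v) (tensor_vec u' v') = cinner u u' * cinner v v'"
proof -
  have 1: "cinner u u' * cinner v v' = (\<Sum>x\<in>UNIV. \<Sum>y\<in>UNIV. cnj (u x) * u' x * (cnj (v y) * v' y))"
    unfolding cinner_def by (simp add: sum_product)
  have 2: "\<dots> = (\<Sum>(x,y)\<in>UNIV \<times> UNIV. cnj (u x) * u' x * (cnj (v y) * v' y))"
    by (rule sum.cartesian_product)
  have 3: "cinner (tensor_vec u v) (tensor_vec u' v') = (\<Sum>(x,y)\<in>UNIV \<times> UNIV. cnj (u x) * u' x * (cnj (v y) * v' y))"
    unfolding cinner_def tensor_vec_def UNIV_Times_UNIV
    apply (rule sum.cong[OF refl])
    apply (clarsimp simp only: split_def)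
    apply simp
    done
  show ?thesis by (simp only: 1 2 3)
qed

lemma onb_tensor:
  assumes "orthonormal_basis (e :: 'a::finite \<Rightarrow> 'a cvec)" "orthonormal_basis (f :: 'b::finite \<Rightarrow> 'b cvec)"
  shows "orthonormal_basis (\<lambda>(i,j). tensor_vec (e i) (f j))"
  using assms unfolding orthonormal_basis_def
  apply (clarsimp simp only: split_paired_all)
  apply (simp only: cinner_tensor case_prod_conv)
  apply simp
  done

lemma cinner_adj:
  "cinner v (apply_op (adj A) w) = cinner (apply_op A v) (w :: 'a::finite cvec)"
proof -
  have 1: "cinner v (apply_op (adj A) w) = (\<Sum>x\<in>UNIV. \<Sum>y\<in>UNIV. cnj (v x) * cnj (A y x) * w y)"
    unfolding cinner_def apply_op_def adj_def by (simp add: sum_distrib_left mult.assoc)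
  have 2: "cinner (apply_op A v) w = (\<Sum>y\<in>UNIV. \<Sum>x\<in>UNIV. cnj (v x) * cnj (A y x) * w y)"
    unfolding cinner_def apply_op_def adj_def by (simp add: sum_distrib_left sum_distrib_right mult_ac)
  show ?thesis unfolding 1 2 by (rule sum.swap)
qed

lemma apply_op_mult:
  "apply_op (op_mult A B) v = apply_op A (apply_op B (v :: 'a::finite cvec))"
proof (rule ext)
  fix x
  have 1: "apply_op (op_mult A B) v x = (\<Sum>y\<in>UNIV. \<Sum>z\<in>UNIV. A x z * B z y * v y)"
    unfolding op_mult_def apply_op_def by (simp add: sum_distrib_right)
  have 2: "apply_op A (apply_op B v) x = (\<Sum>z\<in>UNIV. \<Sum>y\<in>UNIV. A x z * B z y * v y)"
    unfolding apply_op_def by (simp add: sum_distrib_left mult.assoc)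
  show "apply_op (op_mult A B) v x = apply_op A (apply_op B v) x" unfolding 1 2 by (rule sum.swap)
qed

lemma delta_sum: "(\<Sum>y\<in>UNIV. (if x = y then 1 else 0) * (f y :: complex)) = f (x :: 'a::finite)"
proof -
  have "(\<Sum>y\<in>UNIV. (if x = y then 1 else 0) * f y) = (\<Sum>y\<in>UNIV. if x = y then f y else 0)"
    by (rule sum.cong) auto
  thus ?thesis by simp
qed

lemma apply_id: "apply_op id_op v = (v :: 'a::finite cvec)"
  unfolding apply_op_def id_op_def by (simp only: delta_sum)

lemma adj_adj[simp]: "adj (adj A) = A" by (simp add: adj_def)

lemma unitary_norm:
  assumes "unitary_op U"
  shows "cinner (apply_op U v) (apply_op U v) = cinner v (v :: 'a::finite cvec)"
proof -
  have "cinner (apply_op U v) (apply_op U v) = cinner v (apply_op (adj U) (apply_op U v))"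
    by (simp add: cinner_adj)
  also have "\<dots> = cinner v v" using assms unfolding unitary_op_def
    by (metis apply_op_mult apply_id)
  finally show ?thesis .
qed

lemma conj_form:
  "cinner w (apply_op (op_mult U (op_mult B (adj U))) w)
   = cinner (apply_op (adj U) w) (apply_op B (apply_op (adj U) (w :: 'a::finite cvec)))"
  by (simp add: apply_op_mult cinner_adj[symmetric])



definition dlt :: "'a \<Rightarrow> 'a cvec" where "dlt t = (\<lambda>y. if y = t then 1 else 0)"

lemma cinner_dlt: "cinner (dlt t) v = v (t::'a::finite)"
proof -
  have "cinner (dlt t) v = (\<Sum>y\<in>UNIV. if t = y then v y else 0)"
    unfolding cinner_def dlt_def by (rule sum.cong) auto
  thus ?thesis by simp
qed

lemma onb_dlt: "orthonormal_basis (dlt :: 'a::finite \<Rightarrow> 'a cvec)"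
  unfolding orthonormal_basis_def by (simp add: cinner_dlt) (simp add: dlt_def)

lemma sum_UNIV_pair:
  "(\<Sum>z\<in>(UNIV::('a::finite \<times> 'b::finite) set). g z) = (\<Sum>x\<in>UNIV. \<Sum>y\<in>UNIV. g (x,y))"
  by (simp add: sum.cartesian_product)

lemma gen_form_w:
  "(\<Sum>j\<in>J. c j * cinner (w j) (apply_op A (w j)))
   = (\<Sum>z\<in>UNIV. \<Sum>z'\<in>UNIV. A z z' * (\<Sum>j\<in>J. c j * (cnj (w j z) * w j (z' :: 'a::finite))))"
proof -
  have "(\<Sum>j\<in>J. c j * cinner (w j) (apply_op A (w j)))
      = (\<Sum>j\<in>J. \<Sum>z\<in>UNIV. \<Sum>z'\<in>UNIV. A z z' * (c j * (cnj (w j z) * w j z')))"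
    unfolding cinner_def apply_op_def by (simp add: sum_distrib_left mult_ac)
  also have "\<dots> = (\<Sum>z\<in>UNIV. \<Sum>z'\<in>UNIV. \<Sum>j\<in>J. A z z' * (c j * (cnj (w j z) * w j z')))"
    by (rule trans[OF sum.swap], rule sum.cong[OF refl], rule sum.swap)
  also have "\<dots> = (\<Sum>z\<in>UNIV. \<Sum>z'\<in>UNIV. A z z' * (\<Sum>j\<in>J. c j * (cnj (w j z) * w j z')))"
    by (simp add: sum_distrib_left)
  finally show ?thesis .
qed

lemma ptrace2_onb:
  fixes f :: "'b::finite \<Rightarrow> 'b cvec" and u :: "'a::finite cvec"
  assumes "orthonormal_basis f"
  shows "cinner u (apply_op (ptrace2 A) u)
       = (\<Sum>j\<in>UNIV. cinner (tensor_vec u (f j)) (apply_op A (tensor_vec u (f j))))"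
proof -
  have "(\<Sum>j\<in>UNIV. cinner (tensor_vec u (f j)) (apply_op A (tensor_vec u (f j))))
      = (\<Sum>j\<in>UNIV. 1 * cinner (tensor_vec u (f j)) (apply_op A (tensor_vec u (f j))))" by simp
  also have "\<dots> = (\<Sum>z\<in>UNIV. \<Sum>z'\<in>UNIV. A z z' *
       (\<Sum>j\<in>UNIV. 1 * (cnj (tensor_vec u (f j) z) * tensor_vec u (f j) z')))"
    by (rule gen_form_w)
  also have "\<dots> = (\<Sum>x\<in>UNIV. \<Sum>y\<in>UNIV. \<Sum>x'\<in>UNIV. \<Sum>y'\<in>UNIV. A (x,y) (x',y') *
       (cnj (u x) * u x' * (\<Sum>j\<in>UNIV. f j y' * cnj (f j y))))"
    unfolding sum_UNIV_pair tensor_vec_def by (simp add: sum_distrib_left mult_ac)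
  also have "\<dots> = (\<Sum>x\<in>UNIV. \<Sum>y\<in>UNIV. \<Sum>x'\<in>UNIV. A (x,y) (x',y) * (cnj (u x) * u x'))"
    unfolding onb_complete[OF assms] by (simp add: if_distrib cong: if_cong)
  also have "\<dots> = (\<Sum>x\<in>UNIV. \<Sum>x'\<in>UNIV. \<Sum>y\<in>UNIV. A (x,y) (x',y) * (cnj (u x) * u x'))"
    by (rule sum.cong[OF refl], rule sum.swap)
  also have "\<dots> = cinner u (apply_op (ptrace2 A) u)"
    unfolding cinner_def apply_op_def ptrace2_def by (simp add: sum_distrib_left sum_distrib_right mult_ac)
  finally show ?thesis by simp
qed

lemma diag_form:
  "cinner v (apply_op (\<lambda>x y. \<Sum>i\<in>I. c i * ketbra (e i) (e i) x y) v)
   = (\<Sum>i\<in>I. c i * (cnj (cinner (e i) v) * cinner (e i) (v :: 'a::finite cvec)))"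
proof -
  have "(\<Sum>i\<in>I. c i * (cnj (cinner (e i) v) * cinner (e i) (v :: 'a::finite cvec)))
      = (\<Sum>i\<in>I. \<Sum>x\<in>UNIV. \<Sum>y\<in>UNIV. cnj (v x) * (c i * e i x * cnj (e i y)) * v y)"
    unfolding cinner_def by (simp add: sum_distrib_left sum_distrib_right mult_ac)
  also have "\<dots> = (\<Sum>x\<in>UNIV. \<Sum>y\<in>UNIV. \<Sum>i\<in>I. cnj (v x) * (c i * e i x * cnj (e i y)) * v y)"
    by (rule trans[OF sum.swap], rule sum.cong[OF refl], rule sum.swap)
  also have "\<dots> = cinner v (apply_op (\<lambda>x y. \<Sum>i\<in>I. c i * ketbra (e i) (e i) x y) v)"
    unfolding cinner_def apply_op_def ketbra_def by (simp add: sum_distrib_left sum_distrib_right mult_ac)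
  finally show ?thesis by simp
qed

lemma spectral:
  fixes A :: "'a::finite cop"
  assumes "eigenbasis A e"
  shows "A = (\<lambda>x y. \<Sum>i\<in>UNIV. cinner (e i) (apply_op A (e i)) * ketbra (e i) (e i) x y)"
proof (intro ext)
  fix x y
  have onb: "orthonormal_basis e" using assms unfolding eigenbasis_def by simp
  have ev: "apply_op A (e i) = (\<lambda>x. cinner (e i) (apply_op A (e i)) * e i x)" for i
  proof -
    obtain c where c: "apply_op A (e i) = (\<lambda>x. c * e i x)"
      using assms unfolding eigenbasis_def is_eigvec_def by blast
    have "cinner (e i) (apply_op A (e i)) = c * cinner (e i) (e i)"
      unfolding c cinner_def by (simp add: sum_distrib_left mult_ac)
    also have "\<dots> = c" using onb unfolding orthonormal_basis_def by simp
    finally show ?thesis using c by simp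
  qed
  have "A x y = (\<Sum>z\<in>UNIV. A x z * (\<Sum>i\<in>UNIV. e i z * cnj (e i y)))"
    unfolding onb_complete[OF onb] by (simp add: if_distrib cong: if_cong)
  also have "\<dots> = (\<Sum>z\<in>UNIV. \<Sum>i\<in>UNIV. A x z * e i z * cnj (e i y))"
    by (simp add: sum_distrib_left mult_ac)
  also have "\<dots> = (\<Sum>i\<in>UNIV. \<Sum>z\<in>UNIV. A x z * e i z * cnj (e i y))"
    by (rule sum.swap)
  also have "\<dots> = (\<Sum>i\<in>UNIV. apply_op A (e i) x * cnj (e i y))"
    unfolding apply_op_def by (simp add: sum_distrib_right)
  also have "\<dots> = (\<Sum>i\<in>UNIV. cinner (e i) (apply_op A (e i)) * ketbra (e i) (e i) x y)"
    by (subst ev) (simp add: ketbra_def mult_ac)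
  finally show "A x y = (\<Sum>i\<in>UNIV. cinner (e i) (apply_op A (e i)) * ketbra (e i) (e i) x y)" .
qed



lemma tensor_diag_form:
  fixes A :: "'a::finite cop" and e :: "'r \<Rightarrow> 'b::finite cvec" and v :: "('a \<times> 'b) cvec"
  shows "cinner v (apply_op (tensor_op A (\<lambda>y y'. \<Sum>r\<in>R. c r * ketbra (e r) (e r) y y')) v)
   = (\<Sum>r\<in>R. c r * cinner (\<lambda>x. \<Sum>y\<in>UNIV. cnj (e r y) * v (x,y))
                          (apply_op A (\<lambda>x. \<Sum>y\<in>UNIV. cnj (e r y) * v (x,y))))"
proof -
  define Q where "Q = (\<lambda>y y'. \<Sum>r\<in>R. c r * ketbra (e r) (e r) y y')"
  have inner: "(\<Sum>r\<in>R. c r * (cnj (\<Sum>y\<in>UNIV. cnj (e r y) * v (x,y)) * (\<Sum>y\<in>UNIV. cnj (e r y) * v (x',y))))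
     = (\<Sum>y\<in>UNIV. \<Sum>y'\<in>UNIV. cnj (v (x,y)) * Q y y' * v (x',y'))" for x x'
  proof -
    have "(\<Sum>r\<in>R. c r * (cnj (\<Sum>y\<in>UNIV. cnj (e r y) * v (x,y)) * (\<Sum>y\<in>UNIV. cnj (e r y) * v (x',y))))
       = (\<Sum>r\<in>R. \<Sum>y\<in>UNIV. \<Sum>y'\<in>UNIV. cnj (v (x,y)) * (c r * ketbra (e r) (e r) y y') * v (x',y'))"
      unfolding ketbra_def
      apply (simp add: sum_distrib_left sum_distrib_right mult_ac)
      apply (rule sum.cong[OF refl], rule sum.swap)
      done
    also have "\<dots> = (\<Sum>y\<in>UNIV. \<Sum>y'\<in>UNIV. \<Sum>r\<in>R. cnj (v (x,y)) * (c r * ketbra (e r) (e r) y y') * v (x',y'))"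
      by (rule trans[OF sum.swap], rule sum.cong[OF refl], rule sum.swap)
    also have "\<dots> = (\<Sum>y\<in>UNIV. \<Sum>y'\<in>UNIV. cnj (v (x,y)) * Q y y' * v (x',y'))"
      unfolding Q_def by (simp add: sum_distrib_left sum_distrib_right)
    finally show ?thesis .
  qed
  have "(\<Sum>r\<in>R. c r * cinner (\<lambda>x. \<Sum>y\<in>UNIV. cnj (e r y) * v (x,y))
                          (apply_op A (\<lambda>x. \<Sum>y\<in>UNIV. cnj (e r y) * v (x,y))))
      = (\<Sum>x\<in>UNIV. \<Sum>x'\<in>UNIV. A x x' * (\<Sum>y\<in>UNIV. \<Sum>y'\<in>UNIV. cnj (v (x,y)) * Q y y' * v (x',y')))"
    by (simp only: gen_form_w inner)
  also have "\<dots> = (\<Sum>x\<in>UNIV. \<Sum>x'\<in>UNIV. \<Sum>y\<in>UNIV. \<Sum>y'\<in>UNIV. cnj (v (x,y)) * (A x x' * Q y y') * v (x',y'))"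
    by (simp add: sum_distrib_left mult_ac)
  also have "\<dots> = (\<Sum>x\<in>UNIV. \<Sum>y\<in>UNIV. \<Sum>x'\<in>UNIV. \<Sum>y'\<in>UNIV. cnj (v (x,y)) * (A x x' * Q y y') * v (x',y'))"
    by (rule sum.cong[OF refl], rule sum.swap)
  also have "\<dots> = cinner v (apply_op (tensor_op A Q) v)"
    unfolding cinner_def apply_op_def tensor_op_def sum_UNIV_pair
    by (simp add: sum_distrib_left sum_distrib_right mult_ac)
  finally show ?thesis unfolding Q_def by simp
qed

lemma cinner_tensor_dlt:
  "cinner (tensor_vec p q) V = (\<Sum>t\<in>UNIV. cnj (q t) * cinner (tensor_vec p (dlt t)) (V :: ('a::finite \<times> 'b::finite) cvec))"
proof -
  have "(\<Sum>t\<in>UNIV. cnj (q t) * cinner (tensor_vec p (dlt t)) V)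
      = (\<Sum>t\<in>UNIV. \<Sum>s\<in>UNIV. \<Sum>t'\<in>UNIV. cnj (q t) * (cnj (p s) * (cnj (dlt t t') * V (s,t'))))"
    unfolding cinner_def sum_UNIV_pair tensor_vec_def by (simp add: sum_distrib_left mult_ac)
  also have "\<dots> = (\<Sum>t\<in>UNIV. \<Sum>s\<in>UNIV. cnj (q t) * (cnj (p s) * V (s,t)))"
  proof -
    have "(\<Sum>t'\<in>UNIV. cnj (q t) * (cnj (p s) * (cnj (dlt t t') * V (s,t'))))
        = cnj (q t) * (cnj (p s) * V (s,t))" for s t
    proof -
      have "(\<Sum>t'\<in>UNIV. cnj (q t) * (cnj (p s) * (cnj (dlt t t') * V (s,t'))))
          = (\<Sum>t'\<in>UNIV. if t = t' then cnj (q t) * (cnj (p s) * V (s,t')) else 0)"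
        unfolding dlt_def by (rule sum.cong) auto
      thus ?thesis by simp
    qed
    thus ?thesis by simp
  qed
  also have "\<dots> = (\<Sum>s\<in>UNIV. \<Sum>t\<in>UNIV. cnj (q t) * (cnj (p s) * V (s,t)))"
    by (rule sum.swap)
  also have "\<dots> = cinner (tensor_vec p q) V"
    unfolding cinner_def sum_UNIV_pair tensor_vec_def by (simp add: mult_ac)
  finally show ?thesis by simp
qed

lemma delta_sum': "(\<Sum>y\<in>UNIV. (if y = x then 1 else 0) * (f y :: complex)) = f (x :: 'a::finite)"
proof -
  have "(\<Sum>y\<in>UNIV. (if y = x then 1 else 0) * f y) = (\<Sum>y\<in>UNIV. if y = x then f y else 0)"
    by (rule sum.cong) auto
  thus ?thesis by simp
qed

lemma cinner_swap: "cinner u v = cnj (cinner v (u :: 'a::finite cvec))"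
  unfolding cinner_def by (simp add: mult.commute)

lemma adjU:
  fixes USR :: "('s::finite \<times> 'r::finite) cop" and q :: "'m::finite cvec"
  shows "(\<lambda>x. \<Sum>y\<in>UNIV. cnj (e y) * apply_op (adj (\<lambda>((s, m), r) ((s', m'), r'). USR (s, r) (s', r') * id_op m m'))
                 (tensor_vec (tensor_vec p q) (dlt t)) (x,y))
       = tensor_vec (\<lambda>s1. \<Sum>y\<in>UNIV. cnj (e y) * apply_op (adj USR) (tensor_vec p (dlt t)) (s1,y)) q"
proof (rule ext, clarify)
  fix s1 m
  have "apply_op (adj (\<lambda>((s, m), r) ((s', m'), r'). USR (s, r) (s', r') * id_op m m'))
                 (tensor_vec (tensor_vec p q) (dlt t)) ((s1,m),y)
        = q m * apply_op (adj USR) (tensor_vec p (dlt t)) (s1,y)" for y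
  proof -
    have "apply_op (adj (\<lambda>((s, m), r) ((s', m'), r'). USR (s, r) (s', r') * id_op m m'))
                 (tensor_vec (tensor_vec p q) (dlt t)) ((s1,m),y)
       = (\<Sum>s\<in>UNIV. \<Sum>m2\<in>UNIV. \<Sum>t1\<in>UNIV. (if m2 = m then 1 else 0) * (cnj (USR (s,t1) (s1,y)) * p s * q m2 * dlt t t1))"
      unfolding apply_op_def adj_def sum_UNIV_pair tensor_vec_def id_op_def
      by (auto intro!: sum.cong simp: mult_ac)
    also have "\<dots> = (\<Sum>s\<in>UNIV. \<Sum>t1\<in>UNIV. cnj (USR (s,t1) (s1,y)) * p s * q m * dlt t t1)"
    proof -
      have "(\<Sum>m2\<in>UNIV. \<Sum>t1\<in>UNIV. (if m2 = m then 1 else 0) * (cnj (USR (s,t1) (s1,y)) * p s * q m2 * dlt t t1))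
          = (\<Sum>t1\<in>UNIV. cnj (USR (s,t1) (s1,y)) * p s * q m * dlt t t1)" for s
      proof -
        have "(\<Sum>m2\<in>UNIV. \<Sum>t1\<in>UNIV. (if m2 = m then 1 else 0) * (cnj (USR (s,t1) (s1,y)) * p s * q m2 * dlt t t1))
          = (\<Sum>m2\<in>UNIV. (if m2 = m then 1 else 0) * (\<Sum>t1\<in>UNIV. cnj (USR (s,t1) (s1,y)) * p s * q m2 * dlt t t1))"
          by (simp only: sum_distrib_left)
        also have "\<dots> = (\<Sum>t1\<in>UNIV. cnj (USR (s,t1) (s1,y)) * p s * q m * dlt t t1)"
          by (rule delta_sum')
        finally show ?thesis .
      qed
      thus ?thesis by simp
    qed
    also have "\<dots> = q m * apply_op (adj USR) (tensor_vec p (dlt t)) (s1,y)"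
      unfolding apply_op_def adj_def sum_UNIV_pair tensor_vec_def
      by (simp add: sum_distrib_left mult_ac)
    finally show ?thesis .
  qed
  thus "(\<Sum>y\<in>UNIV. cnj (e y) * apply_op (adj (\<lambda>((s, m), r) ((s', m'), r'). USR (s, r) (s', r') * id_op m m'))
                 (tensor_vec (tensor_vec p q) (dlt t)) ((s1,m),y)) =
        tensor_vec (\<lambda>s1. \<Sum>y\<in>UNIV. cnj (e y) * apply_op (adj USR) (tensor_vec p (dlt t)) (s1,y)) q (s1, m)"
    unfolding tensor_vec_def by (simp add: sum_distrib_left sum_distrib_right mult_ac)
qed



theorem theorem6:
  fixes \<rho>SM :: "('s::finite \<times> 'm::finite) cop"
    and USR :: "('s \<times> 'r::finite) cop"
    and E :: "'r \<Rightarrow> real" and er :: "'r \<Rightarrow> 'r cvec"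
    and \<beta> :: real
    and ea :: "'s \<Rightarrow> 's cvec" and ea' :: "'s \<Rightarrow> 's cvec" and Pt :: "'s \<Rightarrow> real"
    and eb :: "'m \<Rightarrow> 'm cvec"
    and Pr and \<rho>R and U and \<rho>SMf and \<rho>Si and \<rho>Sf and \<rho>Mi and Pab and Pa and Pb
    and Ptab and PF and PFSR and \<sigma>SM and \<sigma>S and \<sigma>I
  defines "Pr \<equiv> \<lambda>r. exp (- \<beta> * E r) / (\<Sum>s\<in>UNIV. exp (- \<beta> * E s))"
    and "\<rho>R \<equiv> (\<lambda>x y. \<Sum>r\<in>UNIV. complex_of_real (Pr r) * ketbra (er r) (er r) x y)"
    and "U \<equiv> (\<lambda>((s, m), r) ((s', m'), r'). USR (s, r) (s', r') * id_op m m')"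
    and "\<rho>SMf \<equiv> ptrace2 (op_mult U (op_mult (tensor_op \<rho>SM \<rho>R) (adj U)))"
    and "\<rho>Si \<equiv> ptrace2 \<rho>SM"
    and "\<rho>Sf \<equiv> ptrace2 \<rho>SMf"
    and "\<rho>Mi \<equiv> ptrace1 \<rho>SM"
    and "Pab \<equiv> \<lambda>a b. Re (cinner (tensor_vec (ea a) (eb b))
                            (apply_op \<rho>SM (tensor_vec (ea a) (eb b))))"
    and "Pa \<equiv> \<lambda>a. \<Sum>b\<in>UNIV. Pab a b"
    and "Pb \<equiv> \<lambda>b. \<Sum>a\<in>UNIV. Pab a b"
    and "Ptab \<equiv> \<lambda>a' b. Re (cinner (tensor_vec (ea' a') (eb b))
                            (apply_op \<rho>SMf (tensor_vec (ea' a') (eb b))))"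
    and "PF \<equiv> \<lambda>(a, b, r, a', r').
            (cmod (cinner (tensor_vec (ea' a') (er r')) (apply_op USR (tensor_vec (ea a) (er r)))))\<^sup>2
            * Pab a b * Pr r"
    and "PFSR \<equiv> \<lambda>(a, r, a', r'). \<Sum>b\<in>UNIV. PF (a, b, r, a', r')"
    and "\<sigma>SM \<equiv> \<lambda>(a, b, r, a', r'). - eln (Ptab a' b / Pb b) + eln (Pab a b / Pb b)
                                  + ereal (\<beta> * (E r' - E r))"
    and "\<sigma>S \<equiv> \<lambda>(a, r, a', r'). - eln (Pt a') + eln (Pa a) + ereal (\<beta> * (E r' - E r))"
    and "\<sigma>I \<equiv> \<lambda>(a, b, r, a', r'). \<sigma>SM (a, b, r, a', r') - \<sigma>S (a, r, a', r')"
  assumes "0 < \<beta>"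
    and "orthonormal_basis er"
    and "density_op \<rho>SM"
    and "unitary_op USR"
    and "eigenbasis \<rho>Si ea"
    and "orthonormal_basis ea'"
    and "\<rho>Sf = (\<lambda>x y. \<Sum>a'\<in>UNIV. complex_of_real (Pt a') * ketbra (ea' a') (ea' a') x y)"
    and "eigenbasis \<rho>Mi eb"
    and "\<forall>a b. 0 < Pab a b"
  shows "(\<forall>a r a' r'. 0 < PFSR (a, r, a', r') \<longrightarrow>
            (\<Sum>b\<in>UNIV. PF (a, b, r, a', r') / PFSR (a, r, a', r')
                         * eexp (- \<sigma>I (a, b, r, a', r'))) = 1)
         \<and> (\<Sum>\<gamma>\<in>{\<gamma>. 0 < PF \<gamma>}. PF \<gamma> * eexp (- \<sigma>I \<gamma>)) = 1"
proof -
  have onb_ea: "orthonormal_basis ea" using \<open>eigenbasis \<rho>Si ea\<close> unfolding eigenbasis_def by simp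
  have onb_eb: "orthonormal_basis eb" using \<open>eigenbasis \<rho>Mi eb\<close> unfolding eigenbasis_def by simp
  have onb_ea': "orthonormal_basis ea'" by fact
  have onb_er: "orthonormal_basis er" by fact
  have densIm: "Im (cinner v (apply_op \<rho>SM v)) = 0" and densRe: "0 \<le> Re (cinner v (apply_op \<rho>SM v))" for v
    using \<open>density_op \<rho>SM\<close> unfolding density_op_def by auto
  have qreal: "cinner v (apply_op \<rho>SM v) = complex_of_real (Re (cinner v (apply_op \<rho>SM v)))" for v
    using densIm[of v] by (simp add: complex_eq_iff)
  have Zpos: "0 < (\<Sum>s\<in>UNIV. exp (- \<beta> * E s))" by (rule sum_pos) auto
  have Pr_pos: "0 < Pr r" for r unfolding Pr_def using Zpos by simp
  have Pr_sum: "(\<Sum>r\<in>UNIV. Pr r) = 1" unfolding Pr_def using Zpos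
    by (simp add: sum_divide_distrib[symmetric])
  have Pab_pos: "0 < Pab a b" for a b using \<open>\<forall>a b. 0 < Pab a b\<close> by simp
  have Pa_pos: "0 < Pa a" for a unfolding Pa_def by (rule sum_pos) (auto intro: Pab_pos)
  have Pb_pos: "0 < Pb b" for b unfolding Pb_def by (rule sum_pos) (auto intro: Pab_pos)

  define phi where "phi a' t r = (\<lambda>s1. \<Sum>y\<in>UNIV. cnj (er r y) * apply_op (adj USR) (tensor_vec (ea' a') (dlt t)) (s1,y))"
    for a' t r
  have Ptab_c: "cinner (tensor_vec (ea' a') (eb b)) (apply_op \<rho>SMf (tensor_vec (ea' a') (eb b)))
     = (\<Sum>t\<in>UNIV. \<Sum>r\<in>UNIV. complex_of_real (Pr r) *
          cinner (tensor_vec (phi a' t r) (eb b)) (apply_op \<rho>SM (tensor_vec (phi a' t r) (eb b))))" for a' b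
  proof -
    let ?u = "tensor_vec (ea' a') (eb b)"
    have "cinner ?u (apply_op \<rho>SMf ?u) = (\<Sum>t\<in>UNIV. cinner (tensor_vec ?u (dlt t))
       (apply_op (op_mult U (op_mult (tensor_op \<rho>SM \<rho>R) (adj U))) (tensor_vec ?u (dlt t))))"
      unfolding \<rho>SMf_def by (rule ptrace2_onb[OF onb_dlt])
    also have "\<dots> = (\<Sum>t\<in>UNIV. cinner (apply_op (adj U) (tensor_vec ?u (dlt t)))
       (apply_op (tensor_op \<rho>SM \<rho>R) (apply_op (adj U) (tensor_vec ?u (dlt t)))))"
      by (simp only: conj_form)
    also have "\<dots> = (\<Sum>t\<in>UNIV. \<Sum>r\<in>UNIV. complex_of_real (Pr r) *
       cinner (\<lambda>x. \<Sum>y\<in>UNIV. cnj (er r y) * apply_op (adj U) (tensor_vec ?u (dlt t)) (x,y))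
         (apply_op \<rho>SM (\<lambda>x. \<Sum>y\<in>UNIV. cnj (er r y) * apply_op (adj U) (tensor_vec ?u (dlt t)) (x,y))))"
      unfolding \<rho>R_def by (simp only: tensor_diag_form)
    also have "\<dots> = (\<Sum>t\<in>UNIV. \<Sum>r\<in>UNIV. complex_of_real (Pr r) *
          cinner (tensor_vec (phi a' t r) (eb b)) (apply_op \<rho>SM (tensor_vec (phi a' t r) (eb b))))"
      unfolding U_def phi_def by (simp only: adjU)
    finally show ?thesis .
  qed
  have Ptab_eq: "Ptab a' b = (\<Sum>t\<in>UNIV. \<Sum>r\<in>UNIV. Pr r *
          Re (cinner (tensor_vec (phi a' t r) (eb b)) (apply_op \<rho>SM (tensor_vec (phi a' t r) (eb b)))))" for a' b
    unfolding Ptab_def Ptab_c by simp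
  have Ptab_nn: "0 \<le> Ptab a' b" for a' b
    unfolding Ptab_eq by (intro sum_nonneg mult_nonneg_nonneg densRe less_imp_le[OF Pr_pos])
  have Ptab_sum: "(\<Sum>b\<in>UNIV. Ptab a' b) = Pt a'" for a'
  proof -
    have "(\<Sum>b\<in>UNIV. Ptab a' b) = Re (cinner (ea' a') (apply_op \<rho>Sf (ea' a')))"
      unfolding Ptab_def \<rho>Sf_def ptrace2_onb[OF onb_eb] by simp
    also have "\<dots> = Re (\<Sum>i\<in>UNIV. complex_of_real (Pt i) * (cnj (cinner (ea' i) (ea' a')) * cinner (ea' i) (ea' a')))"
      unfolding \<open>\<rho>Sf = _\<close> by (simp only: diag_form)
    also have "\<dots> = Pt a'"
    proof -
      have o: "cinner (ea' i) (ea' a') = (if i = a' then 1 else 0)" for i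
        using onb_ea' unfolding orthonormal_basis_def by simp
      have "(\<Sum>i\<in>UNIV. complex_of_real (Pt i) * (cnj (cinner (ea' i) (ea' a')) * cinner (ea' i) (ea' a')))
          = (\<Sum>i\<in>UNIV. if i = a' then complex_of_real (Pt i) else 0)"
        unfolding o by (rule sum.cong) auto
      thus ?thesis by simp
    qed
    finally show ?thesis .
  qed

  have cz: "cnj z * z = complex_of_real ((cmod z)\<^sup>2)" for z
    by (metis complex_norm_square mult.commute)
  define c where "c i = cinner (ea i) (apply_op \<rho>Si (ea i))" for i
  have sp: "\<rho>Si = (\<lambda>x y. \<Sum>i\<in>UNIV. c i * ketbra (ea i) (ea i) x y)"
    unfolding c_def by (rule spectral[OF \<open>eigenbasis \<rho>Si ea\<close>])
  have eigval: "c a = complex_of_real (Pa a)" for a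
  proof -
    have "c a = (\<Sum>b\<in>UNIV. cinner (tensor_vec (ea a) (eb b)) (apply_op \<rho>SM (tensor_vec (ea a) (eb b))))"
      unfolding c_def \<rho>Si_def by (rule ptrace2_onb[OF onb_eb])
    also have "\<dots> = (\<Sum>b\<in>UNIV. complex_of_real (Pab a b))"
      unfolding Pab_def by (subst qreal) simp
    finally show ?thesis unfolding Pa_def by simp
  qed
  have qSi: "Re (cinner v (apply_op \<rho>Si v)) = (\<Sum>a\<in>UNIV. Pa a * (cmod (cinner (ea a) v))\<^sup>2)" for v
  proof -
    have "cinner v (apply_op \<rho>Si v) = (\<Sum>a\<in>UNIV. c a * (cnj (cinner (ea a) v) * cinner (ea a) v))"
      unfolding sp by (rule diag_form)
    also have "\<dots> = (\<Sum>a\<in>UNIV. complex_of_real (Pa a * (cmod (cinner (ea a) v))\<^sup>2))"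
      unfolding eigval cz of_real_mult ..
    finally show ?thesis by simp
  qed
  have Pt_expand: "Pt a' = (\<Sum>t\<in>UNIV. \<Sum>r\<in>UNIV. Pr r * (\<Sum>a\<in>UNIV. Pa a * (cmod (cinner (ea a) (phi a' t r)))\<^sup>2))" for a'
  proof -
    have "Pt a' = (\<Sum>b\<in>UNIV. \<Sum>t\<in>UNIV. \<Sum>r\<in>UNIV. Pr r *
          Re (cinner (tensor_vec (phi a' t r) (eb b)) (apply_op \<rho>SM (tensor_vec (phi a' t r) (eb b)))))"
      unfolding Ptab_sum[symmetric] Ptab_eq ..
    also have "\<dots> = (\<Sum>t\<in>UNIV. \<Sum>r\<in>UNIV. \<Sum>b\<in>UNIV. Pr r *
          Re (cinner (tensor_vec (phi a' t r) (eb b)) (apply_op \<rho>SM (tensor_vec (phi a' t r) (eb b)))))"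
      by (rule trans[OF sum.swap], rule sum.cong[OF refl], rule sum.swap)
    also have "\<dots> = (\<Sum>t\<in>UNIV. \<Sum>r\<in>UNIV. Pr r * Re (cinner (phi a' t r) (apply_op \<rho>Si (phi a' t r))))"
      unfolding \<rho>Si_def ptrace2_onb[OF onb_eb] by (simp add: sum_distrib_left)
    also have "\<dots> = (\<Sum>t\<in>UNIV. \<Sum>r\<in>UNIV. Pr r * (\<Sum>a\<in>UNIV. Pa a * (cmod (cinner (ea a) (phi a' t r)))\<^sup>2))"
      unfolding qSi ..
    finally show ?thesis .
  qed
  define amp where "amp a r a' r' = cinner (tensor_vec (ea' a') (er r')) (apply_op USR (tensor_vec (ea a) (er r)))"
    for a r a' r'
  have inner_phi: "cinner (ea a) (phi a' t r)
      = cnj (cinner (tensor_vec (ea' a') (dlt t)) (apply_op USR (tensor_vec (ea a) (er r))))" for a a' t r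
  proof -
    have "cinner (ea a) (phi a' t r) = cinner (tensor_vec (ea a) (er r)) (apply_op (adj USR) (tensor_vec (ea' a') (dlt t)))"
      unfolding phi_def cinner_def tensor_vec_def sum_UNIV_pair by (simp add: sum_distrib_left mult_ac)
    also have "\<dots> = cnj (cinner (tensor_vec (ea' a') (dlt t)) (apply_op USR (tensor_vec (ea a) (er r))))"
      by (simp add: cinner_adj cinner_swap[of "apply_op USR _"])
    finally show ?thesis .
  qed
  have Pt_pos: "0 < Pt a'" if "amp a r a' r' \<noteq> 0" for a r a' r'
  proof -
    let ?g = "\<lambda>t. cinner (tensor_vec (ea' a') (dlt t)) (apply_op USR (tensor_vec (ea a) (er r)))"
    have aeq: "amp a r a' r' = (\<Sum>t\<in>UNIV. cnj (er r' t) * ?g t)"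
      unfolding amp_def by (rule cinner_tensor_dlt)
    have "\<exists>t. ?g t \<noteq> 0"
    proof (rule ccontr)
      assume "\<not> (\<exists>t. ?g t \<noteq> 0)"
      hence "\<forall>t. ?g t = 0" by blast
      hence "amp a r a' r' = 0" unfolding aeq by simp
      with that show False by simp
    qed
    then obtain t where gt: "?g t \<noteq> 0" by blast
    let ?T = "\<lambda>t r a. Pr r * (Pa a * (cmod (cinner (ea a) (phi a' t r)))\<^sup>2)"
    have T_nn: "0 \<le> ?T t r a" for t r a using Pr_pos[of r] Pa_pos[of a] by simp
    have "0 < ?T t r a" using Pr_pos[of r] Pa_pos[of a] gt by (simp add: inner_phi)
    also have "\<dots> \<le> Pr r * (\<Sum>a\<in>UNIV. Pa a * (cmod (cinner (ea a) (phi a' t r)))\<^sup>2)"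
      unfolding sum_distrib_left by (rule member_le_sum) (use T_nn in auto)
    also have "\<dots> \<le> (\<Sum>r\<in>UNIV. Pr r * (\<Sum>a\<in>UNIV. Pa a * (cmod (cinner (ea a) (phi a' t r)))\<^sup>2))"
      by (rule member_le_sum) (auto intro!: mult_nonneg_nonneg sum_nonneg less_imp_le[OF Pr_pos] less_imp_le[OF Pa_pos])
    also have "\<dots> \<le> Pt a'"
      unfolding Pt_expand
      by (rule member_le_sum) (auto intro!: mult_nonneg_nonneg sum_nonneg less_imp_le[OF Pr_pos] less_imp_le[OF Pa_pos])
    finally show ?thesis .
  qed

  have eexp_val: "eexp (- \<sigma>I (a,b,r,a',r')) = Ptab a' b * Pa a / (Pab a b * Pt a')"
    if Ptpos: "0 < Pt a'" for a b r a' r'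
  proof -
    have e1: "eln (Pab a b / Pb b) = ereal (ln (Pab a b / Pb b))"
      using Pab_pos[of a b] Pb_pos[of b] by (simp add: eln_def)
    have e2: "eln (Pt a') = ereal (ln (Pt a'))" using Ptpos by (simp add: eln_def)
    have e3: "eln (Pa a) = ereal (ln (Pa a))" using Pa_pos[of a] by (simp add: eln_def)
    show ?thesis
    proof (cases "Ptab a' b = 0")
      case True
      have "eln (Ptab a' b / Pb b) = - \<infinity>" using True by (simp add: eln_def)
      hence "\<sigma>I (a,b,r,a',r') = \<infinity>" unfolding \<sigma>I_def \<sigma>SM_def \<sigma>S_def by (simp add: e1 e2 e3)
      thus ?thesis using True by (simp add: eexp_def)
    next
      case False
      hence Pp: "0 < Ptab a' b" using Ptab_nn[of a' b] by simp
      have e0: "eln (Ptab a' b / Pb b) = ereal (ln (Ptab a' b / Pb b))"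
        using Pp Pb_pos[of b] by (simp add: eln_def)
      define X where "X = - ln (Ptab a' b / Pb b) + ln (Pab a b / Pb b) + \<beta> * (E r' - E r)
                        - (- ln (Pt a') + ln (Pa a) + \<beta> * (E r' - E r))"
      have "\<sigma>I (a,b,r,a',r') = ereal X"
        unfolding \<sigma>I_def \<sigma>SM_def \<sigma>S_def X_def by (simp add: e0 e1 e2 e3)
      hence "eexp (- \<sigma>I (a,b,r,a',r')) = exp (- X)" by (simp add: eexp_def)
      also have "- X = ln (Ptab a' b * Pa a / (Pab a b * Pt a'))"
        unfolding X_def using Pp Pb_pos[of b] Pab_pos[of a b] Pa_pos[of a] Ptpos
        by (simp add: ln_div ln_mult)
      also have "exp \<dots> = Ptab a' b * Pa a / (Pab a b * Pt a')"
        using Pp Pab_pos[of a b] Pa_pos[of a] Ptpos by simp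
      finally show ?thesis .
    qed
  qed
  have PF_eq: "PF (a,b,r,a',r') = (cmod (amp a r a' r'))\<^sup>2 * Pab a b * Pr r" for a b r a' r'
    unfolding PF_def amp_def by simp
  have PFSR_eq: "PFSR (a,r,a',r') = (cmod (amp a r a' r'))\<^sup>2 * Pa a * Pr r" for a r a' r'
    unfolding PFSR_def PF_eq Pa_def by (simp add: sum_distrib_left sum_distrib_right)
  have part1: "\<forall>a r a' r'. 0 < PFSR (a, r, a', r') \<longrightarrow>
            (\<Sum>b\<in>UNIV. PF (a, b, r, a', r') / PFSR (a, r, a', r')
                         * eexp (- \<sigma>I (a, b, r, a', r'))) = 1"
  proof (intro allI impI)
    fix a r a' r'
    assume "0 < PFSR (a, r, a', r')"
    hence anz: "amp a r a' r' \<noteq> 0" unfolding PFSR_eq by auto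
    have Ptp: "0 < Pt a'" by (rule Pt_pos[OF anz])
    have cp: "0 < (cmod (amp a r a' r'))\<^sup>2" using anz by simp
    have "(\<Sum>b\<in>UNIV. PF (a, b, r, a', r') / PFSR (a, r, a', r') * eexp (- \<sigma>I (a, b, r, a', r')))
        = (\<Sum>b\<in>UNIV. Ptab a' b / Pt a')"
    proof (rule sum.cong[OF refl])
      fix b
      show "PF (a, b, r, a', r') / PFSR (a, r, a', r') * eexp (- \<sigma>I (a, b, r, a', r')) = Ptab a' b / Pt a'"
        unfolding PF_eq PFSR_eq eexp_val[OF Ptp]
        using cp Pab_pos[of a b] Pa_pos[of a] Pr_pos[of r] Ptp by (simp add: field_simps)
    qed
    also have "\<dots> = 1" using Ptp by (simp add: sum_divide_distrib[symmetric] Ptab_sum)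
    finally show "(\<Sum>b\<in>UNIV. PF (a, b, r, a', r') / PFSR (a, r, a', r') * eexp (- \<sigma>I (a, b, r, a', r'))) = 1" .
  qed

  have amp_sum: "(\<Sum>a'\<in>UNIV. \<Sum>r'\<in>UNIV. (cmod (amp a r a' r'))\<^sup>2) = 1" for a r
  proof -
    let ?V = "apply_op USR (tensor_vec (ea a) (er r))"
    have "complex_of_real (\<Sum>a'\<in>UNIV. \<Sum>r'\<in>UNIV. (cmod (amp a r a' r'))\<^sup>2)
        = (\<Sum>i\<in>UNIV. cnj (cinner ((\<lambda>(i,j). tensor_vec (ea' i) (er j)) i) ?V) * cinner ((\<lambda>(i,j). tensor_vec (ea' i) (er j)) i) ?V)"
      unfolding sum_UNIV_pair amp_def cz by simp
    also have "\<dots> = cinner ?V ?V" by (rule parseval[OF onb_tensor[OF onb_ea' onb_er]])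
    also have "\<dots> = cinner (tensor_vec (ea a) (er r)) (tensor_vec (ea a) (er r))"
      by (rule unitary_norm[OF \<open>unitary_op USR\<close>])
    also have "\<dots> = 1" using onb_ea onb_er unfolding cinner_tensor orthonormal_basis_def by simp
    finally show ?thesis by (metis of_real_eq_1_iff)
  qed
  have Pa_sum: "(\<Sum>a\<in>UNIV. Pa a) = 1"
  proof -
    have "(\<Sum>i\<in>UNIV. cinner ((\<lambda>(i,j). tensor_vec (ea i) (eb j)) i) (apply_op \<rho>SM ((\<lambda>(i,j). tensor_vec (ea i) (eb j)) i)))
        = ctrace \<rho>SM" by (rule trace_onb[OF onb_tensor[OF onb_ea onb_eb]])
    also have "\<dots> = 1" using \<open>density_op \<rho>SM\<close> unfolding density_op_def by simp
    finally have "Re (\<Sum>i\<in>UNIV. cinner ((\<lambda>(i,j). tensor_vec (ea i) (eb j)) i) (apply_op \<rho>SM ((\<lambda>(i,j). tensor_vec (ea i) (eb j)) i))) = 1"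
      by simp
    thus ?thesis unfolding Pa_def Pab_def sum_UNIV_pair by simp
  qed
  define G where "G = (\<lambda>(a,b,r,a',r'). (cmod (amp a r a' r'))\<^sup>2 * Pr r * Pa a * (Ptab a' b / Pt a'))"
  have G_eq: "G (a,b,r,a',r') = (cmod (amp a r a' r'))\<^sup>2 * Pr r * Pa a * (Ptab a' b / Pt a')" for a b r a' r'
    unfolding G_def by simp
  have termG: "(if 0 < PF \<gamma> then PF \<gamma> * eexp (- \<sigma>I \<gamma>) else 0) = G \<gamma>" for \<gamma>
  proof -
    obtain a b r a' r' where g: "\<gamma> = (a,b,r,a',r')" by (cases \<gamma>) auto
    show ?thesis
    proof (cases "amp a r a' r' = 0")
      case True
      thus ?thesis unfolding g G_eq PF_eq by simp
    next
      case False
      have Ptp: "0 < Pt a'" by (rule Pt_pos[OF False])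
      have cp: "0 < (cmod (amp a r a' r'))\<^sup>2" using False by simp
      have "0 < PF \<gamma>" unfolding g PF_eq using cp Pab_pos[of a b] Pr_pos[of r] by simp
      thus ?thesis unfolding g G_eq PF_eq eexp_val[OF Ptp]
        using cp Pab_pos[of a b] Pa_pos[of a] Pr_pos[of r] Ptp by (simp add: field_simps)
    qed
  qed
  have Gb: "(\<Sum>b\<in>UNIV. G (a,b,r,a',r')) = (cmod (amp a r a' r'))\<^sup>2 * Pr r * Pa a" for a r a' r'
  proof (cases "amp a r a' r' = 0")
    case True thus ?thesis unfolding G_eq by simp
  next
    case False
    have Ptp: "0 < Pt a'" by (rule Pt_pos[OF False])
    have "(\<Sum>b\<in>UNIV. G (a,b,r,a',r')) = (cmod (amp a r a' r'))\<^sup>2 * Pr r * Pa a * ((\<Sum>b\<in>UNIV. Ptab a' b) / Pt a')"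
      unfolding G_eq by (simp add: sum_distrib_left sum_divide_distrib)
    thus ?thesis using Ptp unfolding Ptab_sum by simp
  qed
  have part2: "(\<Sum>\<gamma>\<in>{\<gamma>. 0 < PF \<gamma>}. PF \<gamma> * eexp (- \<sigma>I \<gamma>)) = 1"
  proof -
    have "(\<Sum>\<gamma>\<in>{\<gamma>. 0 < PF \<gamma>}. PF \<gamma> * eexp (- \<sigma>I \<gamma>))
        = (\<Sum>\<gamma>\<in>UNIV. if 0 < PF \<gamma> then PF \<gamma> * eexp (- \<sigma>I \<gamma>) else 0)"
      using sum.inter_filter[of UNIV "\<lambda>\<gamma>. PF \<gamma> * eexp (- \<sigma>I \<gamma>)" "\<lambda>\<gamma>. 0 < PF \<gamma>"] by simp
    also have "\<dots> = (\<Sum>\<gamma>\<in>UNIV. G \<gamma>)" unfolding termG ..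
    also have "\<dots> = (\<Sum>a\<in>UNIV. \<Sum>b\<in>UNIV. \<Sum>r\<in>UNIV. \<Sum>a'\<in>UNIV. \<Sum>r'\<in>UNIV. G (a,b,r,a',r'))"
      by (simp only: sum_UNIV_pair)
    also have "\<dots> = (\<Sum>a\<in>UNIV. \<Sum>r\<in>UNIV. \<Sum>a'\<in>UNIV. \<Sum>r'\<in>UNIV. \<Sum>b\<in>UNIV. G (a,b,r,a',r'))"
      by (rule sum.cong[OF refl], rule trans[OF sum.swap], rule sum.cong[OF refl],
          rule trans[OF sum.swap], rule sum.cong[OF refl], rule sum.swap)
    also have "\<dots> = (\<Sum>a\<in>UNIV. \<Sum>r\<in>UNIV. \<Sum>a'\<in>UNIV. \<Sum>r'\<in>UNIV. (cmod (amp a r a' r'))\<^sup>2 * Pr r * Pa a)"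
      unfolding Gb ..
    also have "\<dots> = (\<Sum>a\<in>UNIV. \<Sum>r\<in>UNIV. Pa a * Pr r * (\<Sum>a'\<in>UNIV. \<Sum>r'\<in>UNIV. (cmod (amp a r a' r'))\<^sup>2))"
      by (simp add: sum_distrib_left mult_ac)
    also have "\<dots> = (\<Sum>a\<in>UNIV. \<Sum>r\<in>UNIV. Pa a * Pr r)" unfolding amp_sum by simp
    also have "\<dots> = (\<Sum>a\<in>UNIV. Pa a) * (\<Sum>r\<in>UNIV. Pr r)" by (simp add: sum_product)
    also have "\<dots> = 1" unfolding Pa_sum Pr_sum by simp
    finally show ?thesis .
  qed
  show ?thesis using part1 part2 by blast
qed


end
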